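(* Let $a_1\ge1$ be an integer, let $\bm{x} \in \mathcal{L}(f)$ with $x_0 = 1$, let $p$ be a prime not dividing $D$, let $\mathfrak{p}$ be a prime ideal of $\mathcal{O}_K$ lying over $p$, let $v \ge 1$ be an integer, let $n := \operatorname{ord}_{\mathfrak{p}}(\alpha^2)$, and let $s,t$ be integers with $0 \le s < t < 2n$ and $s \equiv t \pmod 2$. Put $z_{s,t} := (-1)^{t+1}\alpha^{-(s+t)}\in\mathcal{O}_K$. Then $x_s \equiv x_t \pmod{p^v}$ if and only if $1 - z_{s,t}$ is invertible modulo $\mathfrak{p}^v$ and $x_1 \equiv (\beta - \alpha z_{s,t})(1 - z_{s,t})^{-1} \pmod{\mathfrak{p}^v}$, where $(1-z_{s,t})^{-1}$ denotes an inverse of $1-z_{s,t}$ modulo $\mathfrak{p}^v$.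
   Context: Let $f := X^2 - a_1X - 1$, $D := a_1^2+4$, $K := \mathbb{Q}(\sqrt{D})$ with ring of integers $\mathcal{O}_K$, and $\alpha,\beta\in\mathcal{O}_K$ the roots of $f$ ($\alpha\beta=-1$, so $\alpha$ is a unit). $\mathcal{L}(f)$ is the set of integer sequences $\bm{x}=(x_n)_{n\ge0}$ with $x_{n+2} = a_1x_{n+1} + x_n$ for all $n\ge0$. $\operatorname{ord}_{\mathfrak{p}}(\theta)$ is the multiplicative order of $\theta$ modulo the ideal $\mathfrak{p}$. *)

theory Defs
  imports "HOL-Computational_Algebra.Polynomial" "HOL-Algebra.Ideal_Product"
    "HOL-Number_Theory.Cong"
begin

definition quad_field :: "int \<Rightarrow> real set" where
  "quad_field D = {of_rat a + of_rat b * sqrt (of_int D) | a b. True}"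

definition ring_of_integers :: "int \<Rightarrow> real ring" where
  "ring_of_integers D = \<lparr> carrier = {x \<in> quad_field D. algebraic_int x},
     mult = (*), one = 1, zero = 0, add = (+) \<rparr>"

definition ideal_power :: "('a, 'b) ring_scheme \<Rightarrow> 'a set \<Rightarrow> nat \<Rightarrow> 'a set" where
  "ideal_power R I n = ((\<lambda>J. ideal_prod R I J) ^^ n) (carrier R)"

definition cong_ideal :: "real \<Rightarrow> real \<Rightarrow> real set \<Rightarrow> bool" where
  "cong_ideal a b I \<longleftrightarrow> a - b \<in> I"

definition ord_mod_ideal :: "real set \<Rightarrow> real \<Rightarrow> nat" where
  "ord_mod_ideal P \<theta> = (LEAST n. n > 0 \<and> cong_ideal (\<theta> ^ n) 1 P)"

end

theory Submission imports Defs begin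

locale qctx =
  fixes a1 p :: int and P :: "real set" and \<alpha> \<beta> :: real and D :: int
  assumes D_def: "D = a1^2+4" and a1: "a1 \<ge> 1"
  and ra: "\<alpha>^2 - of_int a1 * \<alpha> - 1 = 0" and rb: "\<beta>^2 - of_int a1*\<beta> - 1 = 0" and ab: "\<alpha> \<noteq> \<beta>"
  and pp: "prime p" and pD: "\<not> p dvd D"
  and PI: "primeideal P (ring_of_integers D)" and pP: "of_int p \<in> P"
begin

abbreviation "R \<equiv> ring_of_integers D"
abbreviation "C \<equiv> carrier R"

lemma C_iff: "x \<in> C \<longleftrightarrow> x \<in> quad_field D \<and> algebraic_int x"
  by (simp add: ring_of_integers_def)
lemma R_simps[simp]: "mult R = (*)" "add R = (+)" "one R = 1" "zero R = 0"
  by (simp_all add: ring_of_integers_def)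

lemma cr: "cring R" using PI unfolding primeideal_def by auto
lemma idl: "ideal P R" using PI unfolding primeideal_def by auto

lemma C_add: "x \<in> C \<Longrightarrow> y \<in> C \<Longrightarrow> x + y \<in> C"
  using cring.cring_simprules(1)[OF cr, of x y] by simp
lemma C_mult: "x \<in> C \<Longrightarrow> y \<in> C \<Longrightarrow> x * y \<in> C"
  using cring.cring_simprules(5)[OF cr, of x y] by simp
lemma C_int[simp]: "of_int m \<in> C"
proof -
  have "of_int m = of_rat (of_int m) + of_rat 0 * sqrt (of_int D)" by simp
  hence "(of_int m::real) \<in> quad_field D" unfolding quad_field_def by blast
  thus ?thesis by (simp add: C_iff)
qed
lemma C_uminus: "x \<in> C \<Longrightarrow> -x \<in> C"
proof -
  assume "x \<in> C"
  then obtain a b where x: "x = of_rat a + of_rat b * sqrt (of_int D)" "algebraic_int x"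
    unfolding quad_field_def C_iff by auto
  have "-x = of_rat (-a) + of_rat (-b) * sqrt (of_int D)" using x by (simp add: of_rat_minus)
  hence "-x \<in> quad_field D" unfolding quad_field_def by blast
  thus ?thesis using x C_iff by (metis algebraic_int_minus)
qed
lemma C_diff: "x \<in> C \<Longrightarrow> y \<in> C \<Longrightarrow> x - y \<in> C"
  using C_add[OF _ C_uminus] by (metis diff_conv_add_uminus)
lemma C_1: "1 \<in> C" using C_int[of 1] by simp
lemma C_pow: "x \<in> C \<Longrightarrow> x ^ n \<in> C"
  by (induction n) (auto intro: C_mult C_1)

lemma P_C: "y \<in> P \<Longrightarrow> y \<in> C"
  using ideal.Icarr[OF idl] by simp
lemma P_add: "x \<in> P \<Longrightarrow> y \<in> P \<Longrightarrow> x + y \<in> P"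
  using additive_subgroup.a_closed[OF ideal.axioms(1)[OF idl]] by simp
lemma P_lmult: "y \<in> P \<Longrightarrow> r \<in> C \<Longrightarrow> r * y \<in> P"
  using ideal.I_l_closed[OF idl] by simp
lemma P_rmult: "y \<in> P \<Longrightarrow> r \<in> C \<Longrightarrow> y * r \<in> P"
  using ideal.I_r_closed[OF idl] by simp
lemma P_uminus: "y \<in> P \<Longrightarrow> -y \<in> P"
  using P_lmult[of y "-1"] C_int[of "-1"] by simp
lemma P_diff: "x \<in> P \<Longrightarrow> y \<in> P \<Longrightarrow> x - y \<in> P"
  using P_add[OF _ P_uminus] by (metis diff_conv_add_uminus)
lemma P_prime: "a \<in> C \<Longrightarrow> b \<in> C \<Longrightarrow> a * b \<in> P \<Longrightarrow> a \<in> P \<or> b \<in> P"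
  using primeideal.I_prime[OF PI, of a b] by simp
lemma one_notin: "1 \<notin> P"
proof
  assume "1 \<in> P"
  hence "C \<subseteq> P" using P_rmult[of 1] by auto
  moreover have "P \<subseteq> C" using P_C by auto
  ultimately show False using primeideal.I_notcarr[OF PI] by auto
qed
lemma P_pow: "a \<in> C \<Longrightarrow> a ^ n \<in> P \<Longrightarrow> a \<in> P"
  apply (induction n) using one_notin by (auto dest: P_prime intro: C_pow)

lemma P_int: "(of_int m \<in> P) \<longleftrightarrow> p dvd m"
proof
  assume "p dvd m" then obtain k where "m = p * k" by auto
  thus "of_int m \<in> P" using P_rmult[OF pP, of "of_int k"] by (simp add: C_int)
next
  assume m: "of_int m \<in> P"
  show "p dvd m"
  proof (rule ccontr)
    assume "\<not> p dvd m"
    hence "coprime p m" using pp by (simp add: prime_imp_coprime)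
    then obtain u v where "u * p + v * m = 1" using bezout_int[of p m] by auto
    hence "(1::real) = of_int u * of_int p + of_int v * of_int m" by (metis of_int_1 of_int_add of_int_mult)
    moreover have "of_int u * of_int p + of_int v * of_int m \<in> P"
      using P_lmult[OF pP] P_lmult[OF m] P_add by simp
    ultimately show False using one_notin by simp
  qed
qed

lemma D_pos: "D > 0" proof - have "a1^2 \<ge> 0" by simp thus ?thesis using D_def by linarith qed
lemma sum_ab: "\<alpha> + \<beta> = of_int a1"
proof -
  have "(\<alpha> - \<beta>) * (\<alpha> + \<beta> - of_int a1) = 0" using ra rb by (simp add: algebra_simps power2_eq_square)
  thus ?thesis using ab by simp
qed
lemma beta_eq: "\<beta> = of_int a1 - \<alpha>" using sum_ab by simp
lemma prod_ab: "\<alpha> * \<beta> = -1" using ra unfolding beta_eq by (simp add: algebra_simps power2_eq_square)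
lemma delta2: "(\<alpha> - \<beta>)^2 = of_int D"
proof -
  have "(\<alpha> - \<beta>)^2 = (\<alpha>+\<beta>)^2 - 4*(\<alpha>*\<beta>)" by (simp add: algebra_simps power2_eq_square)
  thus ?thesis using sum_ab prod_ab D_def by simp
qed
lemma sq_sq: "sqrt (of_int D) * sqrt (of_int D) = (of_int D :: real)"
  using D_pos by simp

lemma sigma: "\<exists>\<sigma>::int. (\<sigma> = 1 \<or> \<sigma> = -1) \<and> \<alpha> - \<beta> = of_int \<sigma> * sqrt (of_int D)"
proof -
  have sq: "sqrt (of_int D) = \<bar>\<alpha> - \<beta>\<bar>" using delta2 by (metis real_sqrt_abs)
  show ?thesis
  proof (cases "\<alpha> - \<beta> \<ge> 0")
    case True thus ?thesis using sq by (intro exI[of _ 1]) simp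
  next
    case False thus ?thesis using sq by (intro exI[of _ "-1"]) simp
  qed
qed

lemma irr: "sqrt (of_int D) \<notin> \<rat>"
proof
  assume "sqrt (of_int D) \<in> \<rat>"
  moreover have "algebraic_int (sqrt (of_int D))" by auto
  ultimately have "sqrt (of_int D) \<in> \<int>" using rational_algebraic_int_is_int by blast
  then obtain m where m: "sqrt (of_int D) = of_int m" by (auto elim: Ints_cases)
  hence "m \<ge> 0" by (metis of_int_0_le_iff real_sqrt_ge_zero D_pos less_imp_le of_int_0_less_iff)
  have "(of_int m::real)^2 = of_int D" using m D_pos by (metis of_int_0_le_iff less_imp_le real_sqrt_pow2 D_pos)
  hence mm: "m^2 = a1^2 + 4" using D_def by (metis of_int_eq_iff of_int_power)
  show False
  proof (cases "m \<le> a1")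
    case True hence "m^2 \<le> a1^2" using \<open>m \<ge> 0\<close> by (simp add: power_mono)
    thus False using mm by simp
  next
    case False
    show False
    proof (cases "m = a1 + 1")
      case True hence "2*a1 = 3" using mm by (simp add: power2_eq_square algebra_simps)
      thus False by presburger
    next
      case False hence "m \<ge> a1 + 2" using \<open>\<not> m \<le> a1\<close> by simp
      hence "m^2 \<ge> (a1+2)^2" using a1 by (simp add: power_mono)
      thus False using mm a1 by (simp add: power2_eq_square algebra_simps)
    qed
  qed
qed

lemma alpha_C: "\<alpha> \<in> C"
proof -
  obtain \<sigma>::int where s: "\<sigma> = 1 \<or> \<sigma> = -1" "\<alpha> - \<beta> = of_int \<sigma> * sqrt (of_int D)" using sigma by blast
  have "\<alpha> = ((\<alpha>+\<beta>) + (\<alpha> - \<beta>))/2" by simp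
  also have "\<dots> = of_rat (of_int a1/2) + of_rat (of_int \<sigma>/2) * sqrt (of_int D)"
    using s sum_ab by (simp add: of_rat_divide)
  finally have "\<alpha> \<in> quad_field D" unfolding quad_field_def by blast
  moreover have "algebraic_int \<alpha>"
  proof (rule algebraic_int.intros[of "[:-1, - of_int a1, 1:]"])
    show "poly [:-1, - of_int a1, 1:] \<alpha> = 0" using ra by (simp add: algebra_simps power2_eq_square)
    show "\<forall>i. coeff [:-1, - of_int a1, 1:] i \<in> \<int>"
      by (auto simp: coeff_pCons split: nat.splits)
  qed simp
  ultimately show ?thesis by (simp add: C_iff)
qed
lemma beta_C: "\<beta> \<in> C" using beta_eq C_diff[OF C_int alpha_C] by simp

lemma ring_aux: "(sq::real) * sq = d \<Longrightarrow> c + (r + s*sq)*(A + B*sq) = (c + r*A + s*B*d) + (r*B + s*A)*sq"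
  "(sq::real) * sq = d \<Longrightarrow> c + (r - s*sq)*(A - B*sq) = (c + r*A + s*B*d) - (r*B + s*A)*sq"
proof -
  assume h: "sq * sq = d"
  have "c + (r + s*sq)*(A + B*sq) = c + r*A + s*B*(sq*sq) + (r*B + s*A)*sq" by (simp add: algebra_simps)
  thus "c + (r + s*sq)*(A + B*sq) = (c + r*A + s*B*d) + (r*B + s*A)*sq" using h by simp
next
  assume h: "sq * sq = d"
  have "c + (r - s*sq)*(A - B*sq) = c + r*A + s*B*(sq*sq) - (r*B + s*A)*sq" by (simp add: algebra_simps)
  thus "c + (r - s*sq)*(A - B*sq) = (c + r*A + s*B*d) - (r*B + s*A)*sq" using h by simp
qed

lemma conj_poly:
  fixes q :: "real poly" and a b :: rat
  assumes "\<forall>i. coeff q i \<in> \<rat>"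
  shows "\<exists>A B. poly q (of_rat a + of_rat b * sqrt (of_int D)) = of_rat A + of_rat B * sqrt (of_int D) \<and>
     poly q (of_rat a - of_rat b * sqrt (of_int D)) = of_rat A - of_rat B * sqrt (of_int D)"
  using assms
proof (induction q rule: pCons_induct)
  case 0 show ?case by (rule exI[of _ 0], rule exI[of _ 0]) simp
next
  case (pCons c q)
  have "c \<in> \<rat>" using pCons(3) spec[OF pCons(3), of 0] by simp
  then obtain c0 where c0: "c = of_rat c0" by (auto elim: Rats_cases)
  have "\<forall>i. coeff q i \<in> \<rat>" using pCons(3) by (metis coeff_pCons_Suc)
  then obtain A B where AB: "poly q (of_rat a + of_rat b * sqrt (of_int D)) = of_rat A + of_rat B * sqrt (of_int D)"
     "poly q (of_rat a - of_rat b * sqrt (of_int D)) = of_rat A - of_rat B * sqrt (of_int D)" using pCons(2) by blast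
  show ?case
    apply (rule exI[of _ "c0 + a*A + b*B*of_int D"], rule exI[of _ "a*B + b*A"])
    using ring_aux[OF sq_sq, of "of_rat c0" "of_rat a" "of_rat b" "of_rat A" "of_rat B"]
    by (simp add: AB c0 of_rat_add of_rat_mult)
qed

lemma conj_C:
  assumes "of_rat a + of_rat b * sqrt (of_int D) \<in> C"
  shows "of_rat a - of_rat b * sqrt (of_int D) \<in> C"
proof -
  have "algebraic_int (of_rat a + of_rat b * sqrt (of_int D))" using assms C_iff by blast
  then obtain q where q: "lead_coeff q = 1" "\<forall>i. coeff q i \<in> \<int>" "poly q (of_rat a + of_rat b * sqrt (of_int D)) = 0"
    by (auto elim: algebraic_int.cases)
  have "\<forall>i. coeff q i \<in> \<rat>" using q(2) Ints_subset_Rats by blast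
  from conj_poly[OF this, of a b] obtain A B where AB:
    "poly q (of_rat a + of_rat b * sqrt (of_int D)) = of_rat A + of_rat B * sqrt (of_int D)"
    "poly q (of_rat a - of_rat b * sqrt (of_int D)) = of_rat A - of_rat B * sqrt (of_int D)" by blast
  have B0: "B = 0"
  proof (rule ccontr)
    assume "B \<noteq> 0"
    have "of_rat B * sqrt (of_int D) = - of_rat A" using AB(1) q(3) by linarith
    hence "sqrt (of_int D) = - of_rat A / of_rat B" using \<open>B \<noteq> 0\<close> by (simp add: field_simps)
    hence "sqrt (of_int D) = of_rat (- A / B)" by (simp add: of_rat_divide of_rat_minus)
    thus False using irr by (metis Rats_of_rat)
  qed
  hence "A = 0" using AB(1) q(3) by simp
  hence "poly q (of_rat a - of_rat b * sqrt (of_int D)) = 0" using AB(2) B0 by simp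
  hence "algebraic_int (of_rat a - of_rat b * sqrt (of_int D))" using q by (intro algebraic_int.intros) auto
  moreover have "of_rat a - of_rat b * sqrt (of_int D) = of_rat a + of_rat (-b) * sqrt (of_int D)"
    by (simp add: of_rat_minus)
  hence "of_rat a - of_rat b * sqrt (of_int D) \<in> quad_field D" unfolding quad_field_def by blast
  ultimately show ?thesis by (simp add: C_iff)
qed

lemma rat_sq_int:
  fixes q :: rat
  assumes "of_int D * q^2 = of_int K"
  shows "\<exists>e::int. of_int D * q = of_int e"
proof -
  obtain n d where nd: "quotient_of q = (n, d)" by (cases "quotient_of q")
  have d: "d > 0" "coprime n d" "q = of_int n / of_int d"
    using nd quotient_of_denom_pos quotient_of_coprime quotient_of_div by blast+
  have "of_int D * (of_int n)^2 = of_int K * (of_int d :: rat)^2"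
    using assms d by (simp add: field_simps power2_eq_square)
  hence eq: "D * n^2 = K * d^2" by (metis of_int_eq_iff of_int_mult of_int_power)
  hence "d^2 dvd D * n^2" by simp
  moreover have "coprime (d^2) (n^2)" using d(2) by (simp add: coprime_commute)
  ultimately have "d^2 dvd D" by (simp add: coprime_dvd_mult_left_iff)
  moreover have "d dvd d^2" by (simp add: power2_eq_square)
  ultimately have "d dvd D" using dvd_trans by blast
  then obtain k where k: "D = d * k" by auto
  have "of_int D * q = of_int (k * n)" using d k by (simp add: field_simps)
  thus ?thesis by blast
qed

lemma parity_aux:
  fixes T N e \<sigma> :: int
  assumes "e^2 = D*T^2 - 4*N*D" "\<sigma> = 1 \<or> \<sigma> = -1"
  shows "even (D*T - \<sigma>*a1*e)"
proof (cases "even a1")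
  case True
  hence "even D" using D_def by simp
  thus ?thesis using True by simp
next
  case False
  hence oD: "odd D" using D_def by simp
  have "even e \<longleftrightarrow> even T"
  proof -
    have "e^2 - D*T^2 = 2*(-2*N*D)" using assms(1) by simp
    hence "even (e^2 - D*T^2)" by simp
    hence "even (e^2) \<longleftrightarrow> even (D*T^2)" by simp
    thus ?thesis using oD by simp
  qed
  thus ?thesis using False oD assms(2) by auto
qed

lemma struct: assumes "x \<in> C" shows "\<exists>u w::int. of_int D * x = of_int u + of_int w * \<alpha>"
proof -
  obtain a b where x: "x = of_rat a + of_rat b * sqrt (of_int D)"
    using assms unfolding C_iff quad_field_def by auto
  define x' where "x' = of_rat a - of_rat b * sqrt (of_int D)"
  have x'C: "x' \<in> C" unfolding x'_def using conj_C assms x by simp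
  have "x + x' \<in> C" using C_add[OF assms x'C] .
  moreover have "x + x' = of_rat (2*a)" unfolding x x'_def by (simp add: of_rat_mult)
  ultimately have "of_rat (2*a) \<in> (\<int>::real set)" using rational_algebraic_int_is_int C_iff by (metis Rats_of_rat)
  then obtain T where T: "of_rat (2*a) = (of_int T::real)" by (auto elim: Ints_cases)
  hence T': "2*a = of_int T" by (metis of_rat_eq_iff of_rat_of_int_eq)
  have "x * x' \<in> C" using C_mult[OF assms x'C] .
  moreover have "x * x' = of_rat (a^2 - b^2 * of_int D)" unfolding x x'_def
    using sq_sq by (simp add: of_rat_mult of_rat_diff of_rat_power algebra_simps power2_eq_square)
  ultimately have "of_rat (a^2 - b^2 * of_int D) \<in> (\<int>::real set)" using rational_algebraic_int_is_int C_iff by (metis Rats_of_rat)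
  then obtain N where N: "of_rat (a^2 - b^2 * of_int D) = (of_int N::real)" by (auto elim: Ints_cases)
  hence N': "a^2 - b^2 * of_int D = of_int N" by (metis of_rat_eq_iff of_rat_of_int_eq)
  have "of_int (T^2 - 4*N) = (2*a)^2 - 4*(a^2 - b^2 * of_int D)" by (simp add: T'[symmetric] N'[symmetric])
  hence "of_int D * (2*b)^2 = of_int (T^2 - 4*N)" by (simp add: algebra_simps power2_eq_square)
  then obtain e where e: "of_int D * (2*b) = of_int e" using rat_sq_int by blast
  have "(of_int e::rat)^2 = of_int D * (of_int D * (2*b)^2)" unfolding e[symmetric] by (simp add: power2_eq_square)
  also have "\<dots> = of_int (D * (T^2 - 4*N))" using \<open>of_int D * (2*b)^2 = of_int (T^2 - 4*N)\<close> by simp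
  finally have "e^2 = D*(T^2 - 4*N)" by (metis of_int_eq_iff of_int_power)
  hence ee: "e^2 = D*T^2 - 4*N*D" by (simp add: algebra_simps)
  obtain \<sigma>::int where s: "\<sigma> = 1 \<or> \<sigma> = -1" "\<alpha> - \<beta> = of_int \<sigma> * sqrt (of_int D)" using sigma by blast
  from parity_aux[OF ee s(1)] obtain u where u: "D*T - \<sigma>*a1*e = 2*u" by (rule evenE)
  have sqa: "sqrt (of_int D) = of_int \<sigma> * (2*\<alpha> - of_int a1)"
    using s beta_eq by auto
  have ra: "of_rat a = (of_int T / 2 :: real)" using T by (simp add: of_rat_mult)
  have "b = of_int e / (2 * of_int D)" using e D_pos by (simp add: field_simps)
  hence rb: "of_rat b = (of_int e / (2 * of_int D) :: real)" by (simp add: of_rat_divide of_rat_mult)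
  have "of_int D * x = of_int u + of_int (\<sigma>*e) * \<alpha>"
  proof -
    have "of_int D * x = of_int D * of_int T / 2 + of_int e / 2 * (of_int \<sigma> * (2*\<alpha> - of_int a1))"
      unfolding x ra rb sqa using D_pos by (simp add: field_simps)
    also have "\<dots> = (of_int (D*T - \<sigma>*a1*e)) / 2 + of_int (\<sigma>*e) * \<alpha>" by (simp add: field_simps)
    also have "\<dots> = of_int u + of_int (\<sigma>*e) * \<alpha>" unfolding u by simp
    finally show ?thesis .
  qed
  thus ?thesis by blast
qed

lemma rng: "ring R" using cr cring.axioms(1) by blast

lemma I_add: "ideal I R \<Longrightarrow> x \<in> I \<Longrightarrow> y \<in> I \<Longrightarrow> x + y \<in> I"
  using additive_subgroup.a_closed[OF ideal.axioms(1)] by fastforce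
lemma I_lmult: "ideal I R \<Longrightarrow> y \<in> I \<Longrightarrow> r \<in> C \<Longrightarrow> r * y \<in> I"
  using ideal.I_l_closed by fastforce
lemma I_rmult: "ideal I R \<Longrightarrow> y \<in> I \<Longrightarrow> r \<in> C \<Longrightarrow> y * r \<in> I"
  using ideal.I_r_closed by fastforce
lemma I_uminus: "ideal I R \<Longrightarrow> y \<in> I \<Longrightarrow> -y \<in> I"
  using I_lmult[of I y "-1"] C_int[of "-1"] by simp
lemma I_diff: "ideal I R \<Longrightarrow> x \<in> I \<Longrightarrow> y \<in> I \<Longrightarrow> x - y \<in> I"
  using I_add[OF _ _ I_uminus] by (metis diff_conv_add_uminus)
lemma I_C: "ideal I R \<Longrightarrow> y \<in> I \<Longrightarrow> y \<in> C"
  using ideal.Icarr by fastforce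

definition "Q k = ideal_power R P k"
lemma Q0: "Q 0 = C" by (simp add: Q_def ideal_power_def)
lemma QSuc: "Q (Suc k) = ideal_prod R P (Q k)" by (simp add: Q_def ideal_power_def)
lemma Q_ideal: "ideal (Q k) R"
proof (induction k)
  case 0 thus ?case using ring.oneideal[OF rng] Q0 by simp
next
  case (Suc k) thus ?case using ring.ideal_prod_is_ideal[OF rng idl Suc] QSuc by simp
qed
lemma Q_sub: "Q (Suc k) \<subseteq> P \<inter> Q k"
  using ring.ideal_prod_inter[OF rng idl Q_ideal] QSuc by simp
lemma Q_prod: "i \<in> P \<Longrightarrow> j \<in> Q k \<Longrightarrow> i * j \<in> Q (Suc k)"
  using ideal_prod.prod[of i P j "Q k" R] QSuc by simp
lemma Q1: "Q 1 = P"
proof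
  show "Q 1 \<subseteq> P" using Q_sub[of 0] by simp
  show "P \<subseteq> Q 1"
  proof
    fix i assume "i \<in> P"
    moreover have "(1::real) \<in> Q 0" unfolding Q0 by (rule C_1)
    ultimately have "i * 1 \<in> Q (Suc 0)" by (rule Q_prod)
    thus "i \<in> Q 1" by simp
  qed
qed
lemma Q_P: "k \<ge> 1 \<Longrightarrow> Q k \<subseteq> P"
  using Q_sub by (cases k) auto
lemma Q_mono: "k \<le> l \<Longrightarrow> Q l \<subseteq> Q k"
proof (induction l)
  case 0 thus ?case by simp
next
  case (Suc l) thus ?case using Q_sub[of l] by (cases "k = Suc l") auto
qed
lemma pow_Q: "of_int (p^k) \<in> Q k"
proof (induction k)
  case 0 thus ?case using Q0 C_1 by simp
next
  case (Suc k) thus ?case using Q_prod[OF pP Suc] by simp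
qed

lemma D_notP: "of_int D \<notin> P" using P_int pD by simp
lemma delta_notP: "\<alpha> - \<beta> \<notin> P"
proof
  assume "\<alpha> - \<beta> \<in> P"
  hence "(\<alpha> - \<beta>) * (\<alpha> - \<beta>) \<in> P" using P_lmult C_diff alpha_C beta_C by blast
  thus False using delta2 D_notP by (simp add: power2_eq_square)
qed

lemma pR_gcd:
  assumes z: "z \<in> C" and r: "r \<in> C" "of_int D * z = of_int p * r"
  shows "\<exists>r\<in>C. z = of_int p * r"
proof -
  have "coprime p D" using pp pD by (simp add: prime_imp_coprime)
  then obtain u v where uv: "u * p + v * D = 1" using bezout_int[of p D] by auto
  have "z = (of_int u * of_int p + of_int v * of_int D) * z" using uv by (metis mult_1 of_int_1 of_int_add of_int_mult)
  also have "\<dots> = of_int p * (of_int u * z + of_int v * r)" using r by (simp add: algebra_simps)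
  finally show ?thesis using z r by (blast intro: C_add C_mult C_int)
qed

lemma modinv: "\<not> p dvd m \<Longrightarrow> \<exists>m'. p dvd (m*m' - 1)"
proof -
  assume "\<not> p dvd m"
  hence "coprime p m" using pp by (simp add: prime_imp_coprime)
  then obtain u v where uv: "u * p + v * m = 1" using bezout_int[of p m] by auto
  hence "m*v - 1 = p * (-u)" by (simp add: algebra_simps)
  thus ?thesis by (metis dvd_triv_left)
qed

lemma fac: "(\<alpha> - of_int c) * (\<beta> - of_int c) = of_int (c^2 - a1*c - 1)"
  using sum_ab prod_ab by (simp add: algebra_simps power2_eq_square)
     (metis (no_types, lifting) add.commute distrib_left mult.commute)

lemma noroot:
  assumes B: "\<forall>c. \<alpha> - of_int c \<notin> P"
  shows "\<not> p dvd (c^2 - a1*c - 1)"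
proof
  assume "p dvd (c^2 - a1*c - 1)"
  hence "of_int (c^2 - a1*c - 1) \<in> P" using P_int by blast
  hence "(\<alpha> - of_int c) * (\<beta> - of_int c) \<in> P" using fac by metis
  hence "\<alpha> - of_int c \<in> P \<or> \<beta> - of_int c \<in> P" using P_prime C_diff alpha_C beta_C C_int by blast
  moreover have "\<beta> - of_int c = - (\<alpha> - of_int (a1 - c))" using beta_eq by simp
  ultimately show False using B P_uminus by (metis minus_minus)
qed

lemma DnotP_mult: "y \<in> C \<Longrightarrow> of_int D * y \<in> P \<Longrightarrow> y \<in> P"
  using P_prime[OF C_int] D_notP by blast

lemma inv_P:
  assumes y: "y \<in> C" "y \<notin> P"
  shows "\<exists>y'\<in>C. y * y' - 1 \<in> P"
proof -
  obtain u w where uw: "of_int D * y = of_int u + of_int w * \<alpha>" using struct[OF y(1)] by blast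
  have DyP: "of_int D * y \<notin> P" using DnotP_mult y by blast
  show ?thesis
  proof (cases "\<exists>c. \<alpha> - of_int c \<in> P")
    case True
    then obtain c where c: "\<alpha> - of_int c \<in> P" by blast
    define m0 where "m0 = u + w * c"
    have d: "of_int D * y - of_int m0 = of_int w * (\<alpha> - of_int c)" unfolding m0_def uw by (simp add: algebra_simps)
    hence dP: "of_int D * y - of_int m0 \<in> P" using P_lmult[OF c C_int] by simp
    have "of_int m0 \<notin> P"
    proof
      assume "of_int m0 \<in> P"
      hence "(of_int D * y - of_int m0) + of_int m0 \<in> P" using dP P_add by blast
      thus False using DyP by simp
    qed
    hence "\<not> p dvd m0" using P_int by simp
    then obtain m' where m': "p dvd (m0 * m' - 1)" using modinv by blast
    have "y * (of_int D * of_int m') - 1 = of_int m' * (of_int D * y - of_int m0) + of_int (m0 * m' - 1)"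
      by (simp add: algebra_simps)
    moreover have "\<dots> \<in> P" using P_lmult[OF dP C_int] m' P_int P_add by blast
    ultimately show ?thesis using C_mult[OF C_int C_int] by (metis (no_types) mult.assoc)
  next
    case False
    define M where "M = u^2 + a1*u*w - w^2"
    have gM: "(of_int u + of_int w * \<alpha>) * (of_int u + of_int w * \<beta>) = of_int M"
    proof -
      have "(of_int u + of_int w * \<alpha>) * (of_int u + of_int w * \<beta>) =
            of_int u ^2 + of_int u * of_int w * (\<alpha> + \<beta>) + of_int w^2 * (\<alpha> * \<beta>)"
        by (simp add: algebra_simps power2_eq_square)
      thus ?thesis unfolding sum_ab prod_ab M_def by (simp add: algebra_simps power2_eq_square)
    qed
    have "\<not> p dvd M"
    proof
      assume pM: "p dvd M"
      show False
      proof (cases "p dvd w")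
        case True
        then obtain w1 where w1: "w = p * w1" by auto
        have e: "u^2 = M + p * (w1*(p*w1) - a1*u*w1)" unfolding M_def w1 by (simp add: algebra_simps power2_eq_square)
        have "p dvd u^2" using pM unfolding e by simp
        hence "p dvd u" using pp prime_dvd_power by blast
        then obtain u1 where u1: "u = p * u1" by auto
        have "of_int D * y = of_int p * (of_int u1 + of_int w1 * \<alpha>)" unfolding uw u1 w1 by (simp add: algebra_simps)
        moreover have "of_int u1 + of_int w1 * \<alpha> \<in> C" by (intro C_add C_mult C_int alpha_C)
        ultimately have "of_int D * y \<in> P" using P_rmult[OF pP] by simp
        thus False using DyP by blast
      next
        case False
        then obtain w' where w': "p dvd (w * w' - 1)" using modinv by blast
        define c' where "c' = u * w'"
        have "(-c')^2 - a1*(-c') - 1 = w'^2 * M - a1*c'*(w*w' - 1) + (w*w' - 1)*(w*w' + 1)"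
          unfolding M_def c'_def by (simp add: algebra_simps power2_eq_square)
        moreover have "p dvd (w'^2 * M - a1*c'*(w*w' - 1) + (w*w' - 1)*(w*w' + 1))" using pM w' by simp
        ultimately have "p dvd ((-c')^2 - a1*(-c') - 1)" by simp
        thus False using noroot \<open>\<not> (\<exists>c. \<alpha> - of_int c \<in> P)\<close> by blast
      qed
    qed
    then obtain M' where M': "p dvd (M * M' - 1)" using modinv by blast
    have "y * (of_int D * (of_int u + of_int w * \<beta>) * of_int M') - 1 = of_int (M * M' - 1)"
    proof -
      have "y * (of_int D * (of_int u + of_int w * \<beta>) * of_int M') = (of_int D * y) * (of_int u + of_int w * \<beta>) * of_int M'"
        by (simp add: algebra_simps)
      also have "\<dots> = of_int M * of_int M'" unfolding uw gM ..
      finally show ?thesis by simp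
    qed
    moreover have "of_int (M * M' - 1) \<in> P" using M' P_int by blast
    moreover have "of_int D * (of_int u + of_int w * \<beta>) * of_int M' \<in> C"
      by (intro C_mult C_add C_int beta_C)
    ultimately show ?thesis by (metis (no_types))
  qed
qed

lemma rho_ex: "\<exists>\<rho>\<in>C. \<rho> \<notin> P \<and> (\<forall>y\<in>P. \<exists>r\<in>C. \<rho> * y = of_int p * r)"
proof (cases "\<exists>c. \<alpha> - of_int c \<in> P")
  case True
  then obtain c where c: "\<alpha> - of_int c \<in> P" by blast
  define \<rho> where "\<rho> = \<beta> - of_int c"
  have rC: "\<rho> \<in> C" unfolding \<rho>_def using C_diff beta_C C_int by blast
  have rP: "\<rho> \<notin> P"
  proof
    assume "\<rho> \<in> P"
    hence "(\<alpha> - of_int c) - \<rho> \<in> P" using c P_diff by blast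
    thus False using delta_notP unfolding \<rho>_def by simp
  qed
  have "p dvd (c^2 - a1*c - 1)"
  proof -
    have "(\<alpha> - of_int c) * (\<beta> - of_int c) \<in> P" using P_rmult[OF c] beta_C C_diff C_int by blast
    thus ?thesis unfolding fac P_int .
  qed
  then obtain j where j: "c^2 - a1*c - 1 = p * j" by auto
  have "\<forall>y\<in>P. \<exists>r\<in>C. \<rho> * y = of_int p * r"
  proof
    fix y assume yP: "y \<in> P"
    hence yC: "y \<in> C" using P_C by blast
    obtain u w where uw: "of_int D * y = of_int u + of_int w * \<alpha>" using struct[OF yC] by blast
    define m0 where "m0 = u + w * c"
    have d: "of_int m0 = of_int D * y - of_int w * (\<alpha> - of_int c)" unfolding m0_def uw by (simp add: algebra_simps)
    have "of_int m0 \<in> P" unfolding d using P_lmult[OF yP C_int] P_lmult[OF c C_int] P_diff by blast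
    then obtain k where k: "m0 = p * k" using P_int by (meson dvdE)
    have "of_int D * (\<rho> * y) = of_int m0 * \<rho> + of_int w * ((\<alpha> - of_int c) * (\<beta> - of_int c))"
      unfolding \<rho>_def d by (simp add: algebra_simps)
    also have "\<dots> = of_int p * (of_int k * \<rho> + of_int w * of_int j)" unfolding fac j k by (simp add: algebra_simps)
    finally have "of_int D * (\<rho> * y) = of_int p * (of_int k * \<rho> + of_int w * of_int j)" .
    moreover have "of_int k * \<rho> + of_int w * of_int j \<in> C" using rC by (intro C_add C_mult C_int)
    moreover have "\<rho> * y \<in> C" using rC yC C_mult by blast
    ultimately show "\<exists>r\<in>C. \<rho> * y = of_int p * r" using pR_gcd by blast
  qed
  thus ?thesis using rC rP by blast
next
  case False
  have "\<forall>y\<in>P. \<exists>r\<in>C. 1 * y = of_int p * r"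
  proof
    fix y assume yP: "y \<in> P"
    hence yC: "y \<in> C" using P_C by blast
    obtain u w where uw: "of_int D * y = of_int u + of_int w * \<alpha>" using struct[OF yC] by blast
    have DyP: "of_int D * y \<in> P" using P_lmult[OF yP C_int] .
    have "p dvd w"
    proof (rule ccontr)
      assume "\<not> p dvd w"
      then obtain w' where w': "p dvd (w * w' - 1)" using modinv by blast
      have "\<alpha> - of_int (- (w'*u)) = of_int w' * (of_int D * y) - of_int (w*w' - 1) * \<alpha>"
        unfolding uw by (simp add: algebra_simps)
      moreover have "of_int (w*w' - 1) \<in> P" using w' P_int by blast
      hence "of_int (w*w' - 1) * \<alpha> \<in> P" using P_rmult[OF _ alpha_C] by blast
      hence "of_int w' * (of_int D * y) - of_int (w*w' - 1) * \<alpha> \<in> P"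
        using P_lmult[OF DyP C_int] P_diff by blast
      ultimately have "\<alpha> - of_int (- (w'*u)) \<in> P" by simp
      thus False using False by blast
    qed
    then obtain w1 where w1: "w = p * w1" by auto
    have "of_int u = of_int D * y - of_int w * \<alpha>" using uw by simp
    moreover have "of_int w \<in> P" using w1 P_int by (metis dvd_triv_left)
    ultimately have "of_int u \<in> P" using DyP P_diff P_rmult[OF _ alpha_C] by auto
    then obtain u1 where u1: "u = p * u1" using P_int by (meson dvdE)
    have "of_int D * y = of_int p * (of_int u1 + of_int w1 * \<alpha>)" unfolding uw u1 w1 by (simp add: algebra_simps)
    moreover have "of_int u1 + of_int w1 * \<alpha> \<in> C" by (intro C_add C_mult C_int alpha_C)
    ultimately show "\<exists>r\<in>C. 1 * y = of_int p * r" using pR_gcd yC by auto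
  qed
  thus ?thesis using C_1 one_notin by blast
qed

lemma rho_pow:
  assumes rC: "\<rho> \<in> C" and rh: "\<forall>y\<in>P. \<exists>r\<in>C. \<rho> * y = of_int p * r"
  shows "e \<in> Q (Suc k) \<Longrightarrow> \<exists>y\<in>P. \<rho>^k * e = of_int p ^ k * y"
proof (induction k arbitrary: e)
  case 0 thus ?case using Q1 by auto
next
  case (Suc k)
  have "e \<in> ideal_prod R P (Q (Suc k))" using Suc.prems QSuc by simp
  thus ?case
  proof (induct e rule: ideal_prod.induct)
    case (prod i j)
    obtain r where r: "r \<in> C" "\<rho> * i = of_int p * r" using rh prod(1) by blast
    obtain y where y: "y \<in> P" "\<rho>^k * j = of_int p ^ k * y" using Suc.IH prod(2) by blast
    have "\<rho>^(Suc k) * (i \<otimes>\<^bsub>R\<^esub> j) = (\<rho> * i) * (\<rho>^k * j)" by (simp add: algebra_simps)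
    also have "\<dots> = of_int p ^ Suc k * (r * y)" unfolding r y by (simp add: algebra_simps)
    finally show ?case using P_lmult[OF y(1) r(1)] by blast
  next
    case (sum s1 s2)
    obtain y1 where y1: "y1 \<in> P" "\<rho>^(Suc k) * s1 = of_int p ^ Suc k * y1" using sum(2) by blast
    obtain y2 where y2: "y2 \<in> P" "\<rho>^(Suc k) * s2 = of_int p ^ Suc k * y2" using sum(4) by blast
    have "\<rho>^(Suc k) * (s1 \<oplus>\<^bsub>R\<^esub> s2) = of_int p ^ Suc k * (y1 + y2)"
      using y1 y2 by (simp add: algebra_simps)
    thus ?case using P_add[OF y1(1) y2(1)] by blast
  qed
qed

lemma Zcap: "of_int m \<in> Q k \<Longrightarrow> p^k dvd m"
proof (induction k arbitrary: m)
  case 0 thus ?case by simp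
next
  case (Suc k)
  have "of_int m \<in> Q k" using Suc.prems Q_sub by blast
  then obtain m1 where m1: "m = p^k * m1" using Suc.IH by (meson dvdE)
  show ?case
  proof (cases "p dvd m1")
    case True thus ?thesis using m1 by (auto simp: mult_dvd_mono)
  next
    case False
    hence "coprime p m1" using pp by (simp add: prime_imp_coprime)
    then obtain a b where ab: "b * p + a * m1 = 1" using bezout_int[of p m1] by auto
    have "(of_int (p^k)::real) = of_int a * of_int m + of_int b * of_int (p^Suc k)"
    proof -
      have "p^k = a * m + b * p^Suc k" using ab m1 by (simp add: algebra_simps) (metis mult.assoc mult.commute mult_1_right distrib_left)
      thus ?thesis by (metis of_int_add of_int_mult)
    qed
    moreover have "of_int a * of_int m + of_int b * of_int (p^Suc k) \<in> Q (Suc k)"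
      using I_add[OF Q_ideal I_lmult[OF Q_ideal Suc.prems C_int] I_lmult[OF Q_ideal pow_Q C_int]] .
    ultimately have pk: "of_int (p^k) \<in> Q (Suc k)" by simp
    obtain \<rho> where r: "\<rho> \<in> C" "\<rho> \<notin> P" "\<forall>y\<in>P. \<exists>r\<in>C. \<rho> * y = of_int p * r" using rho_ex by blast
    obtain y where y: "y \<in> P" "\<rho>^k * of_int (p^k) = of_int p ^ k * y" using rho_pow[OF r(1) r(3) pk] by blast
    have "p \<noteq> 0" using pp by auto
    hence "y = \<rho>^k" using y(2) by simp
    hence "\<rho>^k \<in> P" using y(1) by simp
    thus ?thesis using P_pow r by blast
  qed
qed

lemma inv_Q:
  assumes y: "y \<in> C" "y \<notin> P" and k: "k \<ge> 1"
  shows "\<exists>y'\<in>C. y * y' - 1 \<in> Q k"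
  using k
proof (induction k rule: dec_induct)
  case base thus ?case using inv_P[OF y] Q1 by simp
next
  case (step k)
  then obtain y' where y': "y' \<in> C" "y * y' - 1 \<in> Q k" by blast
  define e where "e = y * y' - 1"
  have eP: "e \<in> P" using y'(2) Q_P step(1) e_def by blast
  have "e * e \<in> Q (Suc k)" using Q_prod[OF eP] y'(2) e_def by blast
  hence "- (e * e) \<in> Q (Suc k)" using I_uminus[OF Q_ideal] by blast
  moreover have "y * (y' * (1 - e)) - 1 = - (e * e)" unfolding e_def by (simp add: algebra_simps)
  moreover have "y' * (1 - e) \<in> C" using y' eP P_C C_1 by (intro C_mult C_diff) auto
  ultimately show ?case by metis
qed

end

lemma ident_aux:
  fixes a b c d A B sg :: real
  assumes h1: "a * c = 1" and h2: "b * d = 1"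
  shows "A*(a - a*b) + B*(sg*c - sg*c*d) = (a - a*b)*(A + B*(-sg*c*c*d))"
proof -
  have h: "(a - a*b)*(c*c*d) = (a*c)*(c*d) - (a*c)*(b*d)*c" by (simp add: algebra_simps)
  have "(a - a*b)*(A + B*(-sg*c*c*d)) = A*(a - a*b) - B*sg*((a - a*b)*(c*c*d))" by (simp add: algebra_simps)
  also have "\<dots> = A*(a - a*b) - B*sg*(c*d - c)" unfolding h h1 h2 by simp
  finally show ?thesis by (simp add: algebra_simps)
qed

lemma seq_formula:
  fixes a1 :: int and x :: "nat \<Rightarrow> int" and \<alpha> \<beta> :: real
  assumes ra: "\<alpha>^2 - of_int a1 * \<alpha> - 1 = 0" and rb: "\<beta>^2 - of_int a1*\<beta> - 1 = 0"
    and rec: "\<And>k. x (k + 2) = a1 * x (k + 1) + x k" and x0: "x 0 = 1"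
  shows "(\<alpha> - \<beta>) * of_int (x n) = (of_int (x 1) - \<beta>) * \<alpha>^n + (\<alpha> - of_int (x 1)) * \<beta>^n"
proof -
  let ?P = "\<lambda>n. (\<alpha> - \<beta>) * of_int (x n) = (of_int (x 1) - \<beta>) * \<alpha>^n + (\<alpha> - of_int (x 1)) * \<beta>^n"
  have "?P n \<and> ?P (Suc n)"
  proof (induction n)
    case 0 thus ?case using x0 by (simp add: algebra_simps)
  next
    case (Suc n)
    have "\<alpha>^2 = of_int a1 * \<alpha> + 1" using ra by simp
    hence "\<alpha>^n * \<alpha>^2 = \<alpha>^n * (of_int a1 * \<alpha> + 1)" by simp
    hence a2: "\<alpha>^(n+2) = of_int a1 * \<alpha>^(n+1) + \<alpha>^n"
      by (simp add: power_add algebra_simps power2_eq_square)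
    have "\<beta>^2 = of_int a1 * \<beta> + 1" using rb by simp
    hence "\<beta>^n * \<beta>^2 = \<beta>^n * (of_int a1 * \<beta> + 1)" by simp
    hence b2: "\<beta>^(n+2) = of_int a1 * \<beta>^(n+1) + \<beta>^n"
      by (simp add: power_add algebra_simps power2_eq_square)
    have "(\<alpha> - \<beta>) * of_int (x (n+2)) = of_int a1 * ((\<alpha> - \<beta>) * of_int (x (n+1))) + (\<alpha> - \<beta>) * of_int (x n)"
      unfolding rec by (simp add: algebra_simps)
    also have "\<dots> = of_int a1 * ((of_int (x 1) - \<beta>) * \<alpha>^(n+1) + (\<alpha> - of_int (x 1)) * \<beta>^(n+1))
       + ((of_int (x 1) - \<beta>) * \<alpha>^n + (\<alpha> - of_int (x 1)) * \<beta>^n)"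
      using Suc by simp
    also have "\<dots> = (of_int (x 1) - \<beta>) * (of_int a1 * \<alpha>^(n+1) + \<alpha>^n) + (\<alpha> - of_int (x 1)) * (of_int a1 * \<beta>^(n+1) + \<beta>^n)"
      by (simp add: algebra_simps)
    also have "\<dots> = (of_int (x 1) - \<beta>) * \<alpha>^(n+2) + (\<alpha> - of_int (x 1)) * \<beta>^(n+2)"
      unfolding a2 b2 ..
    finally show ?case using Suc by simp
  qed
  thus ?thesis by blast
qed


theorem mainTheorem13:
  fixes a1 :: int and x :: "nat \<Rightarrow> int" and p :: int and P :: "real set"
    and v :: nat and s t :: nat and \<alpha> \<beta> :: real
  defines "D \<equiv> a1^2 + 4"
  assumes a1: "a1 \<ge> 1"
    and roots: "\<alpha>^2 - of_int a1 * \<alpha> - 1 = 0" "\<beta>^2 - of_int a1 * \<beta> - 1 = 0" "\<alpha> \<noteq> \<beta>"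
    and rec: "\<And>k. x (k + 2) = a1 * x (k + 1) + x k"
    and x0: "x 0 = 1"
    and p: "prime p" "\<not> p dvd D"
    and P: "primeideal P (ring_of_integers D)" "of_int p \<in> P"
    and v: "v \<ge> 1"
    and st: "s < t" "t < 2 * ord_mod_ideal P (\<alpha>^2)" "even (t - s)"
  shows "[x s = x t] (mod p ^ v) \<longleftrightarrow>
    (let z = (-1) ^ (t + 1) * inverse \<alpha> ^ (s + t);
         Pv = ideal_power (ring_of_integers D) P v
     in \<exists>w \<in> carrier (ring_of_integers D).
          cong_ideal ((1 - z) * w) 1 Pv \<and>
          cong_ideal (of_int (x 1)) ((\<beta> - \<alpha> * z) * w) Pv)"
proof -
  interpret q: qctx a1 p P \<alpha> \<beta> D
    using D_def a1 roots p P by (intro qctx.intro) auto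
  define n where "n = ord_mod_ideal P (\<alpha>^2)"
  define k where "k = (t - s) div 2"
  have tk: "t = s + 2*k" using st unfolding k_def by auto
  have k0: "k > 0" using st tk by auto
  have kn: "k < n" using st tk unfolding n_def by auto
  have a0: "\<alpha> \<noteq> 0" using q.prod_ab by auto
  have ialpha: "inverse \<alpha> = - \<beta>" using q.prod_ab a0 by (simp add: field_simps)
  define z where "z = (-1) ^ (t + 1) * inverse \<alpha> ^ (s + t)"
  define Qv where "Qv = ideal_power (ring_of_integers D) P v"
  have QvQ: "Qv = q.Q v" by (simp add: q.Q_def Qv_def)
  define E where "E = of_int (x 1) * (1 - z) - (\<beta> - \<alpha>*z)"
  define U where "U = \<alpha>^s - \<alpha>^t"
  have key: "(\<alpha> - \<beta>) * of_int (x s - x t) = U * E"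
  proof -
    define A where "A = of_int (x 1) - \<beta>"
    define B where "B = \<alpha> - of_int (x 1)"
    define a where "a = \<alpha>^s"
    define b where "b = \<alpha>^(2*k)"
    define c where "c = inverse \<alpha>^s"
    define d where "d = inverse \<alpha>^(2*k)"
    define sg :: real where "sg = (-1)^s"
    have ac: "a * c = 1"
    proof -
      have "a * c = (\<alpha> * inverse \<alpha>)^s" unfolding a_def c_def by (rule power_mult_distrib[symmetric])
      thus ?thesis using a0 by simp
    qed
    have bd: "b * d = 1"
    proof -
      have "b * d = (\<alpha> * inverse \<alpha>)^(2*k)" unfolding b_def d_def by (rule power_mult_distrib[symmetric])
      thus ?thesis using a0 by simp
    qed
    have at: "\<alpha>^t = a * b" unfolding a_def b_def tk by (simp add: power_add)
    have bb: "\<beta> = - inverse \<alpha>" using ialpha by simp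
    have bpow: "\<beta>^m = (-1)^m * inverse \<alpha>^m" for m unfolding bb by (rule power_minus)
    have bs: "\<beta>^s = sg * c" unfolding sg_def c_def by (rule bpow)
    have m1: "(-1::real)^t = sg" unfolding sg_def tk by (simp add: power_add power_mult)
    have bt: "\<beta>^t = sg * c * d"
    proof -
      have "\<beta>^t = sg * inverse \<alpha>^t" using bpow[of t] m1 by simp
      thus ?thesis unfolding c_def d_def tk by (simp add: power_add mult.assoc)
    qed
    have zz: "z = - sg * c * c * d"
    proof -
      have "(-1::real)^(t+1) = - sg" using m1 by simp
      moreover have "inverse \<alpha> ^ (s + t) = c * c * d" unfolding c_def d_def tk
        by (simp only: power_add add.assoc[symmetric])
      ultimately show ?thesis unfolding z_def by simp
    qed
    have "(\<alpha> - \<beta>) * of_int (x s - x t) = (\<alpha> - \<beta>) * of_int (x s) - (\<alpha> - \<beta>) * of_int (x t)"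
      by (simp add: algebra_simps)
    also have "\<dots> = A * (a - a*b) + B * (sg*c - sg*c*d)"
      unfolding seq_formula[OF roots(1,2) rec x0] A_def[symmetric] B_def[symmetric] at bt bs a_def[symmetric]
      by (simp add: algebra_simps)
    also have "\<dots> = (a - a*b) * (A + B*(-sg*c*c*d))" by (rule ident_aux[OF ac bd])
    also have "A + B*(-sg*c*c*d) = E" unfolding E_def A_def B_def zz[symmetric] by (simp add: algebra_simps)
    also have "a - a*b = U" unfolding U_def using at a_def by simp
    finally show ?thesis by simp
  qed
  have dC: "\<alpha> - \<beta> \<in> q.C" using q.C_diff q.alpha_C q.beta_C by blast
  have m1C: "(-1::real) \<in> q.C" using q.C_int[of "-1"] by simp
  have iaC: "inverse \<alpha> \<in> q.C" using ialpha q.C_uminus q.beta_C by simp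
  have zC: "z \<in> q.C" unfolding z_def by (intro q.C_mult q.C_pow m1C iaC)
  have x1C: "of_int (x 1) \<in> q.C" by (rule q.C_int)
  have EC: "E \<in> q.C" unfolding E_def by (intro q.C_mult q.C_diff x1C zC q.C_1 q.alpha_C q.beta_C)
  have UC: "U \<in> q.C" unfolding U_def by (intro q.C_diff q.C_pow q.alpha_C)
  have UnP: "U \<notin> P"
  proof
    assume UP: "U \<in> P"
    have "\<alpha>^t = \<alpha>^s * (\<alpha>^2)^k" unfolding tk by (simp only: power_add power_mult)
    hence "U = \<alpha>^s * (1 - (\<alpha>^2)^k)" unfolding U_def by (simp only: right_diff_distrib mult_1_right)
    moreover have "1 - (\<alpha>^2)^k \<in> q.C" by (intro q.C_diff q.C_1 q.C_pow q.alpha_C)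
    ultimately have "\<alpha>^s \<in> P \<or> 1 - (\<alpha>^2)^k \<in> P" using q.P_prime[OF q.C_pow[OF q.alpha_C]] UP by metis
    thus False
    proof
      assume "\<alpha>^s \<in> P"
      hence "\<alpha> \<in> P" using q.P_pow q.alpha_C by blast
      hence "\<alpha> * (-\<beta>) \<in> P" using q.P_rmult q.C_uminus q.beta_C by blast
      thus False using q.one_notin q.prod_ab by simp
    next
      assume "1 - (\<alpha>^2)^k \<in> P"
      hence "(\<alpha>^2)^k - 1 \<in> P" using q.P_uminus by fastforce
      hence "cong_ideal ((\<alpha>^2)^k) 1 P" unfolding cong_ideal_def .
      hence "n \<le> k" unfolding n_def ord_mod_ideal_def using k0 by (intro Least_le) simp
      thus False using kn by simp
    qed
  qed
  have QI: "ideal (q.Q v) q.R" by (rule q.Q_ideal)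
  show ?thesis unfolding Let_def z_def[symmetric] Qv_def[symmetric] cong_ideal_def cong_iff_dvd_diff QvQ
  proof
    assume "p^v dvd (x s - x t)"
    then obtain j where j: "x s - x t = p^v * j" by auto
    have "of_int (x s - x t) \<in> q.Q v" unfolding j using q.I_rmult[OF QI q.pow_Q q.C_int] by simp
    hence UE: "U * E \<in> q.Q v" using key q.I_lmult[OF QI _ dC] by metis
    obtain U' where U': "U' \<in> q.C" "U * U' - 1 \<in> q.Q v" using q.inv_Q[OF UC UnP v] by blast
    have "E = U' * (U * E) - E * (U * U' - 1)" by (simp add: algebra_simps)
    hence EQ: "E \<in> q.Q v" using q.I_diff[OF QI q.I_lmult[OF QI UE U'(1)] q.I_lmult[OF QI U'(2) EC]]
      by (simp add: mult.commute)
    have EP: "E \<in> P" using EQ q.Q_P v by blast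
    have "1 - z \<notin> P"
    proof
      assume zP: "1 - z \<in> P"
      have "\<alpha> - \<beta> = E - (of_int (x 1) - \<alpha>) * (1 - z)" unfolding E_def by (simp add: algebra_simps)
      moreover have "E - (of_int (x 1) - \<alpha>) * (1 - z) \<in> P"
        using q.P_diff[OF EP q.P_lmult[OF zP q.C_diff[OF x1C q.alpha_C]]] .
      ultimately show False using q.delta_notP by simp
    qed
    moreover have "1 - z \<in> q.C" by (intro q.C_diff q.C_1 zC)
    ultimately obtain w where w: "w \<in> q.C" "(1 - z) * w - 1 \<in> q.Q v" using q.inv_Q v by blast
    have "of_int (x 1) - (\<beta> - \<alpha> * z) * w = E * w - of_int (x 1) * ((1 - z) * w - 1)"
      unfolding E_def by (simp add: algebra_simps)
    moreover have "E * w - of_int (x 1) * ((1 - z) * w - 1) \<in> q.Q v"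
      using q.I_diff[OF QI q.I_rmult[OF QI EQ w(1)] q.I_lmult[OF QI w(2) x1C]] .
    ultimately show "\<exists>w\<in>q.C. (1 - z) * w - 1 \<in> q.Q v \<and> of_int (x 1) - (\<beta> - \<alpha> * z) * w \<in> q.Q v"
      using w by metis
  next
    assume "\<exists>w\<in>q.C. (1 - z) * w - 1 \<in> q.Q v \<and> of_int (x 1) - (\<beta> - \<alpha> * z) * w \<in> q.Q v"
    then obtain w where w: "w \<in> q.C" "(1 - z) * w - 1 \<in> q.Q v" "of_int (x 1) - (\<beta> - \<alpha> * z) * w \<in> q.Q v"
      by blast
    have "E = (1 - z) * (of_int (x 1) - (\<beta> - \<alpha> * z) * w) + (\<beta> - \<alpha> * z) * ((1 - z) * w - 1)"
      unfolding E_def by (simp add: algebra_simps)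
    moreover have "(1 - z) * (of_int (x 1) - (\<beta> - \<alpha> * z) * w) + (\<beta> - \<alpha> * z) * ((1 - z) * w - 1) \<in> q.Q v"
      by (intro q.I_add[OF QI] q.I_lmult[OF QI] w q.C_diff q.C_1 zC q.C_mult q.alpha_C q.beta_C)
    ultimately have EQ: "E \<in> q.Q v" by simp
    have "of_int (D * (x s - x t)) = (\<alpha> - \<beta>) * ((\<alpha> - \<beta>) * of_int (x s - x t))"
      using q.delta2 by (simp add: power2_eq_square)
    also have "\<dots> = (\<alpha> - \<beta>) * (U * E)" unfolding key ..
    finally have "of_int (D * (x s - x t)) \<in> q.Q v"
      using q.I_lmult[OF QI q.I_lmult[OF QI EQ UC] dC] by simp
    hence dv: "p^v dvd D * (x s - x t)" by (rule q.Zcap)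
    have "coprime p D" using p by (simp add: prime_imp_coprime)
    hence "coprime (p^v) D" by simp
    thus "p^v dvd (x s - x t)" using dv coprime_dvd_mult_right_iff by blast
  qed
qed

end
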